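(* Consider proportional reinsurance with $I=1$, $m(t,y,u)=p-q+qu$ and $\sigma(t,y,u)=\sigma_0u$, where $p<q$ and $\sigma_0>0$. Under the ansatz $V(t,x,y)=U(x)\tilde V(t,y)$ for the value function, the optimal reinsurance-investment strategy (the maximiser in the HJB equation) is given in feedback form by $(u^*(t,x,y),a^*(t,x,y))$ with $$u^*(t,x,y)=\begin{cases}0,&(t,x,y)\in A_0,\\ \dfrac{(\sigma_1(t,y)^2+\sigma_2(t,y)^2)q-\mu(t,y)\sigma_0\sigma_1(t,y)}{\sigma_0^2\sigma_2(t,y)^2A(x)},&(t,x,y)\in(A_0\cup A_1)^c,\\ 1,&(t,x,y)\in A_1,\end{cases}$$ where $A_0=\{(t,x,y)\in[0,T]\times\mathbb R^2: q<\frac{\mu(t,y)\sigma_1(t,y)\sigma_0}{\sigma_1(t,y)^2+\sigma_2(t,y)^2}\}$, $A_1=\{(t,x,y)\in[0,T]\times\mathbb R^2: q>\frac{\sigma_0[\sigma_2(t,y)^2A(x)\sigma_0+\mu(t,y)\sigma_1(t,y)]}{\sigma_1(t,y)^2+\sigma_2(t,y)^2}\}$, and $$a^*(t,x,y)=\frac{\mu(t,y)-A(x)\sigma_0u^*(t,x,y)\sigma_1(t,y)}{A(x)(\sigma_1(t,y)^2+\sigma_2(t,y)^2)}.$$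
   Context: Independent Brownian motions $W^1,W^2,W^Y$; environmental process $dY_t=\mu_Y(t,Y_t)dt+\sigma_Y(t,Y_t)dW^Y_t$ with bounded Lipschitz $C^1$ coefficients; $\mu,\sigma_1,\sigma_2$ bounded continuous positive Lipschitz functions of $(t,y)$ with $\sigma_1+\sigma_2$ bounded away from zero. With retention $u_t\in[0,1]$ (fraction of risk kept) and amount $a_t$ invested in the risky asset, the surplus is $dX_t=\{m(t,Y_t,u_t)+a_t\mu(t,Y_t)\}dt+\{\sigma(t,Y_t,u_t)+a_t\sigma_1(t,Y_t)\}dW^1_t+a_t\sigma_2(t,Y_t)dW^2_t$, and the insurer maximises $\mathbb E[U(X_T)]$ over adapted strategies with $\mathbb E\int_0^Ta_t^2dt<\infty$; $V(t,x,y)$ denotes the value function, with HJB equation $0=V_t+\sup_{u,a}[\{m+a\mu\}V_x+\frac12\{(\sigma+a\sigma_1)^2+a^2\sigma_2^2\}V_{xx}]+\mu_YV_y+\frac12\sigma_Y^2V_{yy}$. $U$ is a SAHARA utility: $A(x):=-U''(x)/U'(x)=\alpha/\sqrt{b^2+(x-d)^2}$, $\alpha>0$, $b>0$, $d\in\mathbb R$. In this section the paper works under the ansatz that $V(t,x,y)=U(x)\tilde V(t,y)$ for some function $\tilde V$. *)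

theory Defs
  imports "HOL-Analysis.Analysis"
begin

definition sahara_A :: "real \<Rightarrow> real \<Rightarrow> real \<Rightarrow> real \<Rightarrow> real" where
  "sahara_A \<alpha> b d x = \<alpha> / sqrt (b^2 + (x - d)^2)"

text \<open>The (u,a)-dependent part of the HJB equation:
  {m + a mu} V_x + 1/2 {(sigma + a sigma_1)^2 + a^2 sigma_2^2} V_xx.\<close>
definition hjb_part :: "(real \<Rightarrow> real) \<Rightarrow> (real \<Rightarrow> real) \<Rightarrow> real \<Rightarrow> real \<Rightarrow> real
    \<Rightarrow> real \<Rightarrow> real \<Rightarrow> real \<Rightarrow> real \<Rightarrow> real" where
  "hjb_part m sig mu s1 s2 Vx Vxx u a =
     (m u + a * mu) * Vx + 1/2 * ((sig u + a * s1)^2 + a^2 * s2^2) * Vxx"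

definition region_A0 :: "real \<Rightarrow> real \<Rightarrow> real \<Rightarrow> (real \<Rightarrow> real \<Rightarrow> real)
    \<Rightarrow> (real \<Rightarrow> real \<Rightarrow> real) \<Rightarrow> (real \<Rightarrow> real \<Rightarrow> real) \<Rightarrow> (real \<times> real \<times> real) set" where
  "region_A0 T q \<sigma>0 mu s1 s2 = {(t, x, y). t \<in> {0..T} \<and>
     q < mu t y * s1 t y * \<sigma>0 / ((s1 t y)^2 + (s2 t y)^2)}"

definition region_A1 :: "real \<Rightarrow> real \<Rightarrow> real \<Rightarrow> (real \<Rightarrow> real) \<Rightarrow> (real \<Rightarrow> real \<Rightarrow> real)
    \<Rightarrow> (real \<Rightarrow> real \<Rightarrow> real) \<Rightarrow> (real \<Rightarrow> real \<Rightarrow> real) \<Rightarrow> (real \<times> real \<times> real) set" where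
  "region_A1 T q \<sigma>0 A mu s1 s2 = {(t, x, y). t \<in> {0..T} \<and>
     q > \<sigma>0 * ((s2 t y)^2 * A x * \<sigma>0 + mu t y * s1 t y) / ((s1 t y)^2 + (s2 t y)^2)}"

definition u_star :: "real \<Rightarrow> real \<Rightarrow> real \<Rightarrow> (real \<Rightarrow> real) \<Rightarrow> (real \<Rightarrow> real \<Rightarrow> real)
    \<Rightarrow> (real \<Rightarrow> real \<Rightarrow> real) \<Rightarrow> (real \<Rightarrow> real \<Rightarrow> real) \<Rightarrow> real \<Rightarrow> real \<Rightarrow> real \<Rightarrow> real" where
  "u_star T q \<sigma>0 A mu s1 s2 t x y =
     (if (t, x, y) \<in> region_A0 T q \<sigma>0 mu s1 s2 then 0
      else if (t, x, y) \<in> region_A1 T q \<sigma>0 A mu s1 s2 then 1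
      else (((s1 t y)^2 + (s2 t y)^2) * q - mu t y * \<sigma>0 * s1 t y)
           / (\<sigma>0^2 * (s2 t y)^2 * A x))"

definition a_star :: "real \<Rightarrow> real \<Rightarrow> real \<Rightarrow> (real \<Rightarrow> real) \<Rightarrow> (real \<Rightarrow> real \<Rightarrow> real)
    \<Rightarrow> (real \<Rightarrow> real \<Rightarrow> real) \<Rightarrow> (real \<Rightarrow> real \<Rightarrow> real) \<Rightarrow> real \<Rightarrow> real \<Rightarrow> real \<Rightarrow> real" where
  "a_star T q \<sigma>0 A mu s1 s2 t x y =
     (mu t y - A x * \<sigma>0 * u_star T q \<sigma>0 A mu s1 s2 t x y * s1 t y)
     / (A x * ((s1 t y)^2 + (s2 t y)^2))"

end

theory Submission
  imports Defs
begin

lemma ident: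
  fixes q mu s1 s2 s0 K u a v SS :: real
  assumes K: "K > 0" and S: "SS > 0" and SS: "SS = s1^2 + s2^2"
  shows "(q * u + a * mu - K/2 * ((s0 * u + a * s1)^2 + a^2 * s2^2)) - (q * v + ((mu - K * s0 * v * s1)/(K * SS)) * mu - K/2 * ((s0 * v + ((mu - K * s0 * v * s1)/(K * SS)) * s1)^2 + ((mu - K * s0 * v * s1)/(K * SS))^2 * s2^2)) =
     - K * SS/2  *  (a - (mu - K * s0 * u * s1)/(K * SS))^2
     + (q - s0 * s1 * mu/SS - K * s0^2 * v * s2^2/SS) * (u-v) - K * s0^2 * s2^2/(2 * SS) * (u-v)^2"
  using K S
  apply (simp add: field_simps power2_eq_square)
  apply (simp add: SS power2_eq_square algebra_simps)
  done

theorem proposition5p2: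
  fixes T p q \<sigma>0 \<alpha> b d :: real
    and mu s1 s2 :: "real \<Rightarrow> real \<Rightarrow> real"
    and U U' U'' :: "real \<Rightarrow> real"
    and Vt :: "real \<Rightarrow> real \<Rightarrow> real"
    and t x y :: real
  assumes T_pos: "T > 0"
    and pq: "p < q" and s0: "\<sigma>0 > 0"
    and ab: "\<alpha> > 0" "b > 0"
    and coeff_pos: "\<And>t y. mu t y > 0" "\<And>t y. s1 t y > 0" "\<And>t y. s2 t y > 0"
    and coeff_bdd: "bounded (range (\<lambda>(t, y). mu t y))" "bounded (range (\<lambda>(t, y). s1 t y))"
                   "bounded (range (\<lambda>(t, y). s2 t y))"
    and coeff_lip: "\<exists>L. \<forall>t y t' y'. \<bar>mu t y - mu t' y'\<bar> \<le> L * dist (t, y) (t', y')"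
                   "\<exists>L. \<forall>t y t' y'. \<bar>s1 t y - s1 t' y'\<bar> \<le> L * dist (t, y) (t', y')"
                   "\<exists>L. \<forall>t y t' y'. \<bar>s2 t y - s2 t' y'\<bar> \<le> L * dist (t, y) (t', y')"
    and sum_away: "\<exists>c>0. \<forall>t y. s1 t y + s2 t y \<ge> c"
    and U1: "\<And>z. (U has_real_derivative U' z) (at z)"
    and U2: "\<And>z. (U' has_real_derivative U'' z) (at z)"
    and Upos: "\<And>z. U' z > 0"
    and sahara: "\<And>z. - U'' z / U' z = sahara_A \<alpha> b d z"
    and Vt_pos: "Vt t y > 0"
    and t_in: "t \<in> {0..T}"
  shows "let m = (\<lambda>u. p - q + q * u); sig = (\<lambda>u. \<sigma>0 * u);
             Vx = U' x * Vt t y; Vxx = U'' x * Vt t y;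
             A = sahara_A \<alpha> b d;
             us = u_star T q \<sigma>0 A mu s1 s2 t x y;
             as = a_star T q \<sigma>0 A mu s1 s2 t x y;
             H = hjb_part m sig (mu t y) (s1 t y) (s2 t y) Vx Vxx
         in us \<in> {0..1} \<and>
            (\<forall>u \<in> {0..1}. \<forall>a. H u a \<le> H us as) \<and>
            (\<forall>u \<in> {0..1}. \<forall>a. H u a = H us as \<longrightarrow> u = us \<and> a = as)"
proof -
  define K where "K = sahara_A \<alpha> b d x"
  have Kpos: "K > 0" unfolding K_def sahara_A_def using ab
    by (simp add: add_pos_nonneg)
  define M where "M = mu t y"
  define a1 where "a1 = s1 t y"
  define a2 where "a2 = s2 t y"
  define SS where "SS = a1^2 + a2^2"
  have M: "M > 0" and A1: "a1 > 0" and A2: "a2 > 0" using coeff_pos by (auto simp: M_def a1_def a2_def)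
  have SSp: "SS > 0" unfolding SS_def using A1 by (simp add: add_pos_nonneg)
  define Vx where "Vx = U' x * Vt t y"
  have Vx: "Vx > 0" unfolding Vx_def using Upos Vt_pos by simp
  have U'': "U'' x = - K * U' x"
    using sahara[of x] Upos[of x] unfolding K_def by (simp add: field_simps)
  have Vxx: "U'' x * Vt t y = - K * Vx" unfolding Vx_def U'' by simp
  define F where "F = (\<lambda>u a. q * u + a * M - K/2 * ((\<sigma>0 * u + a * a1)^2 + a^2 * a2^2))"
  define H where "H = hjb_part (\<lambda>u. p - q + q * u) (\<lambda>u. \<sigma>0 * u) M a1 a2 Vx (- K * Vx)"
  have HF: "H u a = Vx * (p - q + F u a)" for u a
    unfolding H_def F_def hjb_part_def by (simp add: algebra_simps)
  define v where "v = u_star T q \<sigma>0 (sahara_A \<alpha> b d) mu s1 s2 t x y"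
  define w where "w = a_star T q \<sigma>0 (sahara_A \<alpha> b d) mu s1 s2 t x y"
  have w: "w = (M - K * \<sigma>0 * v * a1)/(K * SS)"
    unfolding w_def a_star_def v_def M_def a1_def SS_def a2_def K_def by simp
  define D where "D = q - \<sigma>0 * a1 * M/SS - K * \<sigma>0^2 * v * a2^2/SS"
  have key: "F u a - F v w = - K * SS/2 * (a - (M - K * \<sigma>0 * u * a1)/(K * SS))^2
     + D * (u-v) - K * \<sigma>0^2 * a2^2/(2 * SS) * (u-v)^2" for u a
    unfolding F_def w D_def by (rule ident[OF Kpos SSp SS_def])
  have vD: "v \<in> {0..1} \<and> (\<forall>u\<in>{0..1}. D * (u - v) \<le> 0)"
  proof (cases "(t, x, y) \<in> region_A0 T q \<sigma>0 mu s1 s2")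
    case True
    then have v0: "v = 0" unfolding v_def u_star_def by simp
    from True have "q < M * a1 * \<sigma>0 / SS" unfolding region_A0_def M_def a1_def SS_def a2_def by simp
    then have "D < 0" unfolding D_def v0 by (simp add: mult_ac)
    then show ?thesis using v0 by (auto intro: mult_nonpos_nonneg)
  next
    case nA0: False
    show ?thesis
    proof (cases "(t, x, y) \<in> region_A1 T q \<sigma>0 (sahara_A \<alpha> b d) mu s1 s2")
      case True
      then have v1: "v = 1" using nA0 unfolding v_def u_star_def by simp
      from True have "q > \<sigma>0 * (a2^2 * K * \<sigma>0 + M * a1) / SS"
        unfolding region_A1_def M_def a1_def SS_def a2_def K_def by simp
      then have "q * SS > \<sigma>0 * (a2^2 * K * \<sigma>0 + M * a1)" using SSp by (simp add: field_simps)
      moreover have "D * SS = q * SS - \<sigma>0 * (a2^2 * K * \<sigma>0 + M * a1)"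
        unfolding D_def v1 using SSp by (simp add: field_simps power2_eq_square)
      ultimately have "D * SS > 0" by linarith
      then have "D > 0" using SSp by (simp add: zero_less_mult_iff)
      then show ?thesis using v1 by (auto intro: mult_nonneg_nonpos)
    next
      case False
      then have vdef: "v = (SS * q - M * \<sigma>0 * a1) / (\<sigma>0^2 * a2^2 * K)" using nA0
        unfolding v_def u_star_def M_def a1_def SS_def a2_def K_def by simp
      from nA0 have c0: "q \<ge> M * a1 * \<sigma>0 / SS" using t_in
        unfolding region_A0_def M_def a1_def SS_def a2_def by auto
      from False have c1: "q \<le> \<sigma>0 * (a2^2 * K * \<sigma>0 + M * a1) / SS" using t_in
        unfolding region_A1_def M_def a1_def SS_def a2_def K_def by auto
      have den: "\<sigma>0^2 * a2^2 * K > 0" using s0 A2 Kpos by simp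
      have n0: "SS * q - M * \<sigma>0 * a1 \<ge> 0" using c0 SSp by (simp add: field_simps)
      have n1: "SS * q - M * \<sigma>0 * a1 \<le> \<sigma>0^2 * a2^2 * K" using c1 SSp
        by (simp add: field_simps power2_eq_square)
      have "v \<ge> 0" unfolding vdef using n0 den by simp
      moreover have "v \<le> 1" unfolding vdef using n1 den by simp
      moreover have "D = 0" unfolding D_def vdef using den SSp s0 A2 Kpos
        by (simp add: field_simps power2_eq_square)
      ultimately show ?thesis by simp
    qed
  qed
  have c: "K * \<sigma>0^2 * a2^2/(2 * SS) > 0" using Kpos s0 A2 SSp by simp
  have ks: "K * SS / 2 > 0" using Kpos SSp by simp
  have le: "H u a \<le> H v w" if "u \<in> {0..1}" for u a
  proof -
    have "D * (u - v) \<le> 0" using vD that by blast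
    moreover have "0 \<le> K * SS/2 * (a - (M - K * \<sigma>0 * u * a1)/(K * SS))^2" using ks by (intro mult_nonneg_nonneg) auto
    moreover have "0 \<le> K * \<sigma>0^2 * a2^2/(2 * SS) * (u-v)^2" using c by (intro mult_nonneg_nonneg) auto
    ultimately have "F u a \<le> F v w" using key[of u a] by linarith
    then show ?thesis unfolding HF using Vx by (simp add: mult_left_mono)
  qed
  have eq: "u = v \<and> a = w" if "u \<in> {0..1}" "H u a = H v w" for u a
  proof -
    have "F u a = F v w" using that(2) Vx unfolding HF by simp
    have "D * (u - v) \<le> 0" using vD that by blast
    moreover have "0 \<le> K * SS/2 * (a - (M - K * \<sigma>0 * u * a1)/(K * SS))^2" using ks by (intro mult_nonneg_nonneg) auto
    moreover have "0 \<le> K * \<sigma>0^2 * a2^2/(2 * SS) * (u-v)^2" using c by (intro mult_nonneg_nonneg) auto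
    ultimately have z1: "K * SS/2 * (a - (M - K * \<sigma>0 * u * a1)/(K * SS))^2 = 0"
      and z2: "K * \<sigma>0^2 * a2^2/(2 * SS) * (u-v)^2 = 0"
      using key[of u a] \<open>F u a = F v w\<close> by linarith+
    from z2 Kpos s0 A2 SSp have uv: "u = v" by simp
    from z1 Kpos SSp have "a = (M - K * \<sigma>0 * u * a1)/(K * SS)" by simp
    then show ?thesis using uv w by simp
  qed
  have Heq: "hjb_part (\<lambda>u. p - q + q * u) (\<lambda>u. \<sigma>0 * u) (mu t y) (s1 t y) (s2 t y) (U' x * Vt t y) (U'' x * Vt t y) = H"
    unfolding H_def Vxx M_def a1_def a2_def Vx_def ..
  show ?thesis unfolding Let_def Heq v_def[symmetric] w_def[symmetric]
    using vD le eq by blast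
qed

end
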